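(* Let $\mathbb{R}^n$ be endowed with the $\ell_1$ norm, let $A\in\mathbb{R}^{m\times n}$ have at least two different columns, and let $f:\mathbb{R}^m\to\mathbb{R}\cup\{\infty\}$ be a differentiable convex function with $\mathrm{conv}(A)\subseteq\mathrm{dom}(f)$ and $\frac{L_{f,A}}{\mu^\star_{f,A}}<\infty$. Consider the Frank–Wolfe algorithm with away steps (described below) with step sizes $\alpha_k=\min\left\{\alpha_{\max},-\frac{\langle\nabla f(u_k),v\rangle}{4L_{f,A}}\right\}$. If $x_0$ is a vertex of $\Delta_{n-1}$, then for all $k\ge0$ \[ f(u_k)-f^\star\le\left(1-\min\left\{\frac{\mu^\star_{f,A}}{16L_{f,A}},\frac12\right\}\right)^{k/2}(f(u_0)-f^\star). \]
   Context: $\Delta_{n-1}=\{x\in\mathbb{R}^n_+:\sum_ix_i=1\}$, $e_i$ standard basis vectors, $a_1,\dots,a_n$ the columns of $A$, $\mathrm{conv}(A)=\{Ax:x\in\Delta_{n-1}\}$; for $x\in\Delta_{n-1}$, $I(x)=\{i:x_i>0\}$. For $u\in\mathrm{conv}(A)$, $Z(u)=\{z\in\Delta_{n-1}:Az=u\}$, $\mathrm{dist}(x,Z(u))=\min_{z\in Z(u)}\|x-z\|_1$, and $L_{f,A}=\sup_{u\in\mathrm{conv}(A),\,x\in\Delta_{n-1}\setminus Z(u)}\frac{2(f(Ax)-f(u)-\langle\nabla f(u),Ax-u\rangle)}{\mathrm{dist}(x,Z(u))^2}$. $f^\star=\min_{x\in\Delta_{n-1}}f(Ax)$, $Z^\star=\{z\in\Delta_{n-1}:f(Az)=f^\star\}$,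 $\mu^\star_{f,A}=\inf_{x\in\Delta_{n-1}\setminus Z^\star}\frac{2(f(Ax)-f^\star)}{\mathrm{dist}(x,Z^\star)^2}$ with $\mathrm{dist}(x,Z^\star)=\min_{z\in Z^\star}\|x-z\|_1$. Algorithm: pick $x_0\in\Delta_{n-1}$, $u_0=Ax_0$. For $k=0,1,\dots$: let $j\in\operatorname{argmin}_{i}\langle\nabla f(u_k),a_i\rangle$, $\ell\in\operatorname{argmax}_{i\in I(x_k)}\langle\nabla f(u_k),a_i\rangle$. If $\langle\nabla f(u_k),a_j-u_k\rangle<\langle\nabla f(u_k),u_k-a_\ell\rangle$ or $|I(x_k)|=1$, set $v=a_j-u_k$, $w=e_j-x_k$, $\alpha_{\max}=1$; otherwise set $v=u_k-a_\ell$, $w=x_k-e_\ell$, $\alpha_{\max}=\frac{\langle e_\ell,x_k\rangle}{1-\langle e_\ell,x_k\rangle}$. Then $x_{k+1}=x_k+\alpha_kw$, $u_{k+1}=u_k+\alpha_kv=Ax_{k+1}$. *)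

theory Defs
  imports "HOL-Analysis.Analysis"
begin

text \<open>Vectors in R^n are real^'n; matrices A in R^(m x n) are real^'n^'m,
  the i-th column of A is column i A, and e_i is axis i 1.\<close>

definition std_simplex :: "(real^'n::finite) set" where
  "std_simplex = {x. (\<forall>i. 0 \<le> x$i) \<and> (\<Sum>i\<in>UNIV. x$i) = 1}"

definition convA :: "real^'n::finite^'m::finite \<Rightarrow> (real^'m) set" where
  "convA A = (\<lambda>x. A *v x) ` std_simplex"

definition supp :: "real^'n::finite \<Rightarrow> 'n set" where
  "supp x = {i. x$i > 0}"

definition norm1 :: "real^'n::finite \<Rightarrow> real" where
  "norm1 x = (\<Sum>i\<in>UNIV. \<bar>x$i\<bar>)"

definition dist1 :: "real^'n::finite \<Rightarrow> (real^'n) set \<Rightarrow> real" where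
  "dist1 x S = Inf ((\<lambda>z. norm1 (x - z)) ` S)"

definition Zset :: "real^'n::finite^'m::finite \<Rightarrow> real^'m \<Rightarrow> (real^'n) set" where
  "Zset A u = {z \<in> std_simplex. A *v z = u}"

definition L_fA :: "real^'n::finite^'m::finite \<Rightarrow> (real^'m \<Rightarrow> real) \<Rightarrow> (real^'m \<Rightarrow> real^'m) \<Rightarrow> ereal" where
  "L_fA A f df = (SUP u\<in>convA A. SUP x\<in>std_simplex - Zset A u.
      ereal (2 * (f (A *v x) - f u - df u \<bullet> (A *v x - u)) / (dist1 x (Zset A u))\<^sup>2))"

definition fstar :: "real^'n::finite^'m::finite \<Rightarrow> (real^'m \<Rightarrow> real) \<Rightarrow> real" where
  "fstar A f = Inf ((\<lambda>x. f (A *v x)) ` std_simplex)"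

definition Zstar :: "real^'n::finite^'m::finite \<Rightarrow> (real^'m \<Rightarrow> real) \<Rightarrow> (real^'n) set" where
  "Zstar A f = {z \<in> std_simplex. f (A *v z) = fstar A f}"

definition mu_star :: "real^'n::finite^'m::finite \<Rightarrow> (real^'m \<Rightarrow> real) \<Rightarrow> ereal" where
  "mu_star A f = (INF x\<in>std_simplex - Zstar A f.
      ereal (2 * (f (A *v x) - fstar A f) / (dist1 x (Zstar A f))\<^sup>2))"

text \<open>One iteration of Frank-Wolfe with away steps, given the current iterate x,
  the chosen indices j (Frank-Wolfe vertex) and l (away vertex), and the constant L.\<close>
definition fw_step :: "real^'n::finite^'m::finite \<Rightarrow> (real^'m \<Rightarrow> real^'m) \<Rightarrow> real
    \<Rightarrow> real^'n \<Rightarrow> 'n \<Rightarrow> 'n \<Rightarrow> real^'n" where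
  "fw_step A df L x j l =
    (let u = A *v x; g = df u;
         fw = (g \<bullet> (column j A - u) < g \<bullet> (u - column l A) \<or> card (supp x) = 1);
         v = (if fw then column j A - u else u - column l A);
         w = (if fw then axis j 1 - x else x - axis l 1);
         amax = (if fw then 1 else x$l / (1 - x$l));
         alpha = min amax (- (g \<bullet> v) / (4 * L))
     in x + alpha *\<^sub>R w)"

end

theory Submission
  imports Defs
begin

lemma grad_ineq:
  fixes f :: "'a::real_inner \<Rightarrow> real"
  assumes D_open: "open D" and D_convex: "convex D" and fc: "convex_on D f"
    and fg: "\<forall>u\<in>D. (f has_derivative (\<lambda>h. df u \<bullet> h)) (at u)"
    and u: "u \<in> D" and y: "y \<in> D"
  shows "f u + df u \<bullet> (y - u) \<le> f y"
proof -
  define p where "p = (\<lambda>t::real. u + t *\<^sub>R (y - u))"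
  define S where "S = p -` D"
  have cp: "continuous_on UNIV p" unfolding p_def by (intro continuous_intros)
  have "open S" unfolding S_def using open_vimage[OF D_open cp] .
  have pc: "p ((1 - t) * a + t * b) = (1 - t) *\<^sub>R p a + t *\<^sub>R p b" for t a b
    unfolding p_def by (simp add: algebra_simps)
  have "convex S" unfolding convex_alt S_def
  proof (intro ballI allI impI)
    fix a b and t :: real assume "a \<in> p -` D" "b \<in> p -` D" "0 \<le> t \<and> t \<le> 1"
    then show "(1 - t) *\<^sub>R a + t *\<^sub>R b \<in> p -` D"
      using D_convex unfolding convex_alt by (simp add: pc)
  qed
  have cS: "convex_on S (f \<circ> p)"
  proof (rule convex_onI)
    fix t :: real and a b assume "0 < t" "t < 1" "a \<in> S" "b \<in> S"
    then show "(f \<circ> p) ((1 - t) *\<^sub>R a + t *\<^sub>R b) \<le> (1 - t) * (f \<circ> p) a + t * (f \<circ> p) b"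
      using convex_onD[OF fc, of t "p a" "p b"] unfolding S_def by (simp add: pc)
  qed fact
  have S0: "0 \<in> S" and S1: "1 \<in> S" using u y unfolding S_def p_def by auto
  have "(p has_derivative (\<lambda>t. t *\<^sub>R (y - u))) (at 0)"
    unfolding p_def by (auto intro!: derivative_eq_intros)
  moreover have "(f has_derivative (\<lambda>h. df u \<bullet> h)) (at (p 0))" using fg u by (simp add: p_def)
  ultimately have "((f \<circ> p) has_derivative (\<lambda>t. df u \<bullet> (t *\<^sub>R (y - u)))) (at 0)"
    using diff_chain_at by (fastforce simp: o_def)
  then have "((f \<circ> p) has_derivative (\<lambda>t. (df u \<bullet> (y - u)) * t)) (at 0)"
    by (simp add: mult.commute)
  then have "((f \<circ> p) has_field_derivative (df u \<bullet> (y - u))) (at 0 within S)"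
    by (simp add: has_field_derivative_def has_derivative_at_withinI)
  from convex_on_imp_above_tangent[OF cS convex_connected[OF \<open>convex S\<close>] _ S1 this]
  have "(f \<circ> p) 1 - (f \<circ> p) 0 \<ge> df u \<bullet> (y - u) * (1 - 0)"
    using S0 \<open>open S\<close> interior_open by blast
  then show ?thesis by (simp add: p_def)
qed

lemma simplex_closed: "closed (std_simplex :: (real^'n::finite) set)"
proof -
  have "std_simplex = {x::real^'n. \<forall>i. 0 \<le> x$i} \<inter> {x. (\<Sum>i\<in>UNIV. x$i) = 1}"
    unfolding std_simplex_def by auto
  also have "closed \<dots>"
    by (intro closed_Int closed_Collect_all closed_Collect_le closed_Collect_eq continuous_intros)
  finally show ?thesis .
qed

lemma simplex_bounded: "bounded (std_simplex :: (real^'n::finite) set)"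
proof -
  have "norm x \<le> 1" if "x \<in> std_simplex" for x :: "real^'n"
  proof -
    have "norm x \<le> (\<Sum>i\<in>UNIV. \<bar>x$i\<bar>)" by (rule norm_le_l1_cart)
    also have "\<dots> = (\<Sum>i\<in>UNIV. x$i)" using that unfolding std_simplex_def by (auto intro!: sum.cong)
    also have "\<dots> = 1" using that unfolding std_simplex_def by auto
    finally show ?thesis .
  qed
  then show ?thesis unfolding bounded_iff by blast
qed

lemma simplex_compact: "compact (std_simplex :: (real^'n::finite) set)"
  using simplex_closed simplex_bounded compact_eq_bounded_closed by blast

lemma norm1_cont: "continuous_on S (\<lambda>z. norm1 (y - z))"
  unfolding norm1_def by (intro continuous_intros)

lemma norm1_nonneg: "0 \<le> norm1 x" unfolding norm1_def by (simp add: sum_nonneg)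

lemma norm1_zero: "norm1 x = 0 \<Longrightarrow> x = 0"
  unfolding norm1_def by (simp add: sum_nonneg_eq_0_iff vec_eq_iff)

lemma norm1_triangle: "norm1 (x - y) \<le> norm1 x + norm1 y"
  unfolding norm1_def by (simp add: sum.distrib[symmetric] sum_mono abs_triangle_ineq4)

lemma norm1_scale: "norm1 (c *\<^sub>R x) = \<bar>c\<bar> * norm1 x"
  unfolding norm1_def by (simp add: abs_mult sum_distrib_left)

lemma norm1_simplex: "x \<in> std_simplex \<Longrightarrow> norm1 x = 1"
  unfolding norm1_def std_simplex_def by auto

lemma axis_simplex: "axis i 1 \<in> (std_simplex :: (real^'n::finite) set)"
  unfolding std_simplex_def by (auto simp: axis_def)

lemma dist1_attain:
  fixes S :: "(real^'n::finite) set"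
  assumes "closed S" "S \<subseteq> std_simplex" "S \<noteq> {}"
  shows "\<exists>z\<in>S. dist1 y S = norm1 (y - z)" and "\<And>z. z \<in> S \<Longrightarrow> dist1 y S \<le> norm1 (y - z)"
    and "y \<notin> S \<Longrightarrow> 0 < dist1 y S"
proof -
  have "compact S" using assms simplex_compact compact_Int_closed[of std_simplex S] by (simp add: Int_absorb1)
  then obtain z where z: "z \<in> S" "\<And>w. w \<in> S \<Longrightarrow> norm1 (y - z) \<le> norm1 (y - w)"
    using continuous_attains_inf[OF _ assms(3) norm1_cont] by blast
  have eq: "dist1 y S = norm1 (y - z)" unfolding dist1_def
    by (rule cInf_eq_minimum) (use z in auto)
  then show "\<exists>z\<in>S. dist1 y S = norm1 (y - z)" using z by blast
  show "\<And>w. w \<in> S \<Longrightarrow> dist1 y S \<le> norm1 (y - w)" using eq z by simp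
  show "0 < dist1 y S" if "y \<notin> S"
  proof -
    have "norm1 (y - z) \<noteq> 0" using norm1_zero[of "y - z"] that z by auto
    then show ?thesis using eq norm1_nonneg[of "y - z"] by simp
  qed
qed

lemma mv_sum: "g \<bullet> (A *v x) = (\<Sum>i\<in>UNIV. x$i * (g \<bullet> column i A))"
  by (simp add: matrix_mult_sum scalar_mult_eq_scaleR inner_sum_right)

lemma simplex_lower:
  assumes "x \<in> std_simplex" "\<forall>i. h j \<le> h i"
  shows "h j \<le> (\<Sum>i\<in>UNIV. x$i * h i)"
proof -
  have "h j = (\<Sum>i\<in>UNIV. x$i * h j)" using assms(1) unfolding std_simplex_def by (simp add: sum_distrib_right[symmetric])
  also have "\<dots> \<le> (\<Sum>i\<in>UNIV. x$i * h i)" using assms unfolding std_simplex_def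
    by (intro sum_mono mult_left_mono) auto
  finally show ?thesis .
qed

lemma simplex_upper:
  assumes "x \<in> std_simplex" "\<forall>i\<in>supp x. h i \<le> h l"
  shows "(\<Sum>i\<in>UNIV. x$i * h i) \<le> h l"
proof -
  have "(\<Sum>i\<in>UNIV. x$i * h i) \<le> (\<Sum>i\<in>UNIV. x$i * h l)"
  proof (intro sum_mono)
    fix i
    show "x$i * h i \<le> x$i * h l"
    proof (cases "x$i > 0")
      case True then show ?thesis using assms(2) by (simp add: supp_def)
    next
      case False
      have "0 \<le> x$i" using assms(1) unfolding std_simplex_def by auto
      with False have "x$i = 0" by simp
      then show ?thesis by simp
    qed
  qed
  also have "\<dots> = h l" using assms(1) unfolding std_simplex_def by (simp add: sum_distrib_right[symmetric])
  finally show ?thesis .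
qed

lemma err_bound:
  assumes x: "x \<in> std_simplex" and z: "z \<in> std_simplex" and jm: "\<forall>i. h j \<le> h i"
    and lm: "\<forall>i\<in>supp x. h i \<le> h l"
  shows "(\<Sum>i\<in>UNIV. (x - z)$i * h i) \<le> norm1 (x - z) / 2 * (h l - h j)"
proof -
  let ?d = "x - z"
  have s0: "(\<Sum>i\<in>UNIV. ?d$i) = 0" using x z unfolding std_simplex_def by (simp add: sum_subtractf)
  have "(\<Sum>i\<in>UNIV. ?d$i * h i) = (\<Sum>i\<in>UNIV. ?d$i * (h i - h j))"
    using s0 by (simp add: right_diff_distrib sum_subtractf sum_distrib_right[symmetric])
  also have "\<dots> \<le> (\<Sum>i\<in>UNIV. max (?d$i) 0 * (h l - h j))"
  proof (intro sum_mono)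
    fix i
    show "?d$i * (h i - h j) \<le> max (?d$i) 0 * (h l - h j)"
    proof (cases "?d$i > 0")
      case True
      have "z$i \<ge> 0" using z unfolding std_simplex_def by auto
      then have "x$i > 0" using True by simp
      then have "h i \<le> h l" using lm by (simp add: supp_def)
      then show ?thesis using True jm by (simp add: mult_left_mono)
    next
      case False
      then have "?d$i * (h i - h j) \<le> 0" using jm by (intro mult_nonpos_nonneg) auto
      then show ?thesis using False by simp
    qed
  qed
  also have "\<dots> = (\<Sum>i\<in>UNIV. max (?d$i) 0) * (h l - h j)" by (simp add: sum_distrib_right)
  also have "(\<Sum>i\<in>UNIV. max (?d$i) 0) = norm1 ?d / 2"
  proof -
    have "norm1 ?d = (\<Sum>i\<in>UNIV. 2 * max (?d$i) 0 - ?d$i)" unfolding norm1_def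
      by (intro sum.cong) (auto simp: max_def abs_if)
    also have "\<dots> = 2 * (\<Sum>i\<in>UNIV. max (?d$i) 0)" using s0 by (simp add: sum_subtractf sum_distrib_left)
    finally show ?thesis by simp
  qed
  finally show ?thesis .
qed

lemma count_lemma:
  fixes F :: "nat \<Rightarrow> real" and s :: "nat \<Rightarrow> nat" and drop :: "nat \<Rightarrow> bool"
  assumes mono: "\<forall>k. F (Suc k) \<le> F k" and good: "\<forall>k. \<not> drop k \<longrightarrow> F (Suc k) \<le> r * F k"
    and sd: "\<forall>k. drop k \<longrightarrow> s (Suc k) + 1 \<le> s k" and su: "\<forall>k. s (Suc k) \<le> s k + 1"
    and s1: "\<forall>k. 1 \<le> s k" and s0: "s 0 = 1" and r0: "0 < r" and r1: "r \<le> 1" and F0: "0 \<le> F 0"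
  shows "F k \<le> r powr (real k / 2) * F 0"
proof -
  define G where "G = rec_nat (0::nat) (\<lambda>k a. if drop k then a else Suc a)"
  have G0: "G 0 = 0" and GS: "G (Suc k) = (if drop k then G k else Suc (G k))" for k
    unfolding G_def by simp_all
  have *: "F k \<le> r ^ G k * F 0 \<and> s k + k \<le> 1 + 2 * G k" for k
  proof (induction k)
    case 0 then show ?case using G0 s0 by simp
  next
    case (Suc k)
    show ?case
    proof (cases "drop k")
      case True
      have "F (Suc k) \<le> r ^ G (Suc k) * F 0" using Suc mono True GS[of k] by (metis order_trans)
      moreover have "s (Suc k) + Suc k \<le> 1 + 2 * G (Suc k)" using Suc sd True GS[of k] by fastforce
      ultimately show ?thesis by blast
    next
      case False
      have "F (Suc k) \<le> r * F k" using good False by blast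
      also have "\<dots> \<le> r * (r ^ G k * F 0)" using Suc r0 by (simp add: mult_left_mono)
      finally have "F (Suc k) \<le> r ^ G (Suc k) * F 0" using False GS[of k] by simp
      moreover have "s (Suc k) + Suc k \<le> 1 + 2 * G (Suc k)" using Suc su[rule_format, of k] False GS[of k] by simp
      ultimately show ?thesis by blast
    qed
  qed
  have "k \<le> 2 * G k" using *[of k] s1[rule_format, of k] by linarith
  then have "real k / 2 \<le> real (G k)" by simp
  then have "r powr real (G k) \<le> r powr (real k / 2)" using powr_mono'[of "real k / 2" "real (G k)" r] r0 r1 by simp
  then have "r ^ G k \<le> r powr (real k / 2)" using r0 by (simp add: powr_realpow)
  then show ?thesis using *[of k] F0 by (meson mult_right_mono order_trans)
qed

lemma step_lemma:
  fixes A :: "real^'n::finite^'m::finite" and f :: "real^'m \<Rightarrow> real" and df :: "real^'m \<Rightarrow> real^'m"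
    and x :: "real^'n" and j l :: 'n and Lr mr fs :: real
  assumes xS: "x \<in> std_simplex"
    and jm: "\<forall>i. df (A *v x) \<bullet> column j A \<le> df (A *v x) \<bullet> column i A"
    and lm: "l \<in> supp x \<and> (\<forall>i\<in>supp x. df (A *v x) \<bullet> column i A \<le> df (A *v x) \<bullet> column l A)"
    and gi: "\<forall>y\<in>std_simplex. f (A *v x) + df (A *v x) \<bullet> (A *v y - A *v x) \<le> f (A *v y)"
    and fsl: "\<forall>y\<in>std_simplex. fs \<le> f (A *v y)"
    and L0: "0 \<le> Lr" and m0: "0 \<le> mr"
    and desc: "0 < Lr \<Longrightarrow> \<forall>y\<in>std_simplex. f (A *v y) - f (A *v x) - df (A *v x) \<bullet> (A *v y - A *v x) \<le> Lr / 2 * (norm1 (y - x))\<^sup>2"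
    and mu: "0 < mr \<Longrightarrow> \<exists>z\<in>std_simplex. f (A *v z) = fs \<and> mr / 2 * (norm1 (x - z))\<^sup>2 \<le> f (A *v x) - fs"
  shows "\<exists>drop. fw_step A df Lr x j l \<in> std_simplex \<and> f (A *v fw_step A df Lr x j l) \<le> f (A *v x)
        \<and> card (supp (fw_step A df Lr x j l)) \<le> card (supp x) + 1
        \<and> (drop \<longrightarrow> card (supp (fw_step A df Lr x j l)) + 1 \<le> card (supp x))
        \<and> (\<not> drop \<longrightarrow> f (A *v fw_step A df Lr x j l) - fs \<le> (1 - min (mr / (16 * Lr)) (1/2)) * (f (A *v x) - fs))"
proof -
  define u where "u = A *v x"
  define g where "g = df u"
  define h where "h i = g \<bullet> column i A" for i
  define fw where "fw = (g \<bullet> (column j A - u) < g \<bullet> (u - column l A) \<or> card (supp x) = 1)"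
  define v where "v = (if fw then column j A - u else u - column l A)"
  define w where "w = (if fw then axis j 1 - x else x - axis l 1)"
  define amax where "amax = (if fw then 1 else x$l / (1 - x$l))"
  define \<alpha> where "\<alpha> = min amax (- (g \<bullet> v) / (4 * Lr))"
  define x' where "x' = fw_step A df Lr x j l"
  define c where "c = min (mr / (16 * Lr)) (1/2)"
  have x'_eq: "x' = x + \<alpha> *\<^sub>R w"
    unfolding x'_def fw_step_def Let_def \<alpha>_def amax_def w_def v_def fw_def g_def u_def by simp
  define p where "p = g \<bullet> (column j A - u)"
  define q where "q = g \<bullet> (u - column l A)"
  have gu: "g \<bullet> u = (\<Sum>i\<in>UNIV. x$i * h i)" unfolding u_def h_def by (rule mv_sum)
  have jm': "\<forall>i. h j \<le> h i" using jm unfolding h_def g_def u_def by simp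
  have lm': "\<forall>i\<in>supp x. h i \<le> h l" and lsupp: "l \<in> supp x" using lm unfolding h_def g_def u_def by auto
  have p_eq: "p = h j - g \<bullet> u" unfolding p_def h_def by (simp add: inner_diff_right)
  have q_eq: "q = g \<bullet> u - h l" unfolding q_def h_def by (simp add: inner_diff_right)
  have p0: "p \<le> 0" using simplex_lower[OF xS jm'] gu p_eq by simp
  have q0: "q \<le> 0" using simplex_upper[OF xS lm'] gu q_eq by simp
  have xnn: "\<And>i. 0 \<le> x$i" and xsum: "(\<Sum>i\<in>UNIV. x$i) = 1" using xS unfolding std_simplex_def by auto
  have card1: "x = axis l 1" if "card (supp x) = 1"
  proof -
    have "supp x = {l}" using that lsupp by (metis card_1_singletonE singletonD)
    then have oth: "x$i = 0" if "i \<noteq> l" for i using xnn[of i] that unfolding supp_def by force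
    then have "(\<Sum>i\<in>UNIV. x$i) = x$l" by (simp add: sum.remove[of UNIV l] sum.neutral)
    then have "x$l = 1" using xsum by simp
    then show ?thesis using oth by (auto simp: vec_eq_iff axis_def)
  qed
  have gv: "g \<bullet> v = (if fw then p else q)" unfolding v_def p_def q_def by simp
  have fw_pq: "p \<le> q" if "fw"
  proof (cases "card (supp x) = 1")
    case True
    then have "u = column l A" using card1 unfolding u_def by (simp add: matrix_vector_mult_basis)
    then have "q = 0" unfolding q_def by simp
    then show ?thesis using p0 by simp
  next
    case False then show ?thesis using that unfolding fw_def p_def q_def by simp
  qed
  have aw_pq: "q \<le> p" if "\<not> fw" using that unfolding fw_def p_def q_def by simp
  have xl1: "x$l < 1" if "\<not> fw"
  proof (rule ccontr)
    assume "\<not> x$l < 1"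
    have "(\<Sum>i\<in>UNIV. x$i) = x$l + (\<Sum>i\<in>UNIV - {l}. x$i)" by (simp add: sum.remove[of UNIV l])
    then have "(\<Sum>i\<in>UNIV - {l}. x$i) \<le> 0" using xsum \<open>\<not> x$l < 1\<close> by simp
    then have "\<forall>i\<in>UNIV - {l}. x$i = 0" using xnn by (metis sum_nonneg_eq_0_iff finite order_antisym sum_nonneg)
    then have "\<forall>i. i \<noteq> l \<longrightarrow> x$i = 0" by simp
    then have "supp x = {l}" using lsupp unfolding supp_def by fastforce
    then show False using that unfolding fw_def by simp
  qed
  define \<delta> where "\<delta> = - (g \<bullet> v)"
  have \<delta>0: "0 \<le> \<delta>" using gv p0 q0 unfolding \<delta>_def by simp
  have gap: "h l - h j \<le> 2 * \<delta>" using gv fw_pq aw_pq p_eq q_eq unfolding \<delta>_def by (cases fw) auto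
  have amax0: "0 \<le> amax" unfolding amax_def using xnn[of l] xl1 by auto
  have \<alpha>_eq: "\<alpha> = min amax (\<delta> / (4 * Lr))" unfolding \<alpha>_def \<delta>_def by simp
  have \<alpha>0: "0 \<le> \<alpha>" using amax0 \<delta>0 L0 unfolding \<alpha>_eq by simp
  have \<alpha>max: "\<alpha> \<le> amax" unfolding \<alpha>_eq by simp
  have x'c: "x'$i = x$i + \<alpha> * w$i" for i using x'_eq by simp
  have wsum: "(\<Sum>i\<in>UNIV. w$i) = 0"
    unfolding w_def using xsum by (simp add: sum_subtractf axis_def)
  have x'S: "x' \<in> std_simplex"
  proof -
    have "0 \<le> x'$i" for i
    proof (cases fw)
      case True
      then have "\<alpha> \<le> 1" using \<alpha>max unfolding amax_def by simp
      have "x'$i = (1 - \<alpha>) * x$i + \<alpha> * (if i = j then 1 else 0)"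
        using True x'c unfolding w_def by (simp add: axis_def algebra_simps)
      then show ?thesis using \<open>\<alpha> \<le> 1\<close> \<alpha>0 xnn[of i] by simp
    next
      case False
      have e: "x'$i = (1 + \<alpha>) * x$i - \<alpha> * (if i = l then 1 else 0)"
        using False x'c unfolding w_def by (simp add: axis_def algebra_simps)
      show ?thesis
      proof (cases "i = l")
        case True
        have "\<alpha> \<le> x$l / (1 - x$l)" using \<alpha>max False unfolding amax_def by simp
        then have "\<alpha> * (1 - x$l) \<le> x$l" using xl1[OF False] by (simp add: pos_le_divide_eq)
        then show ?thesis using e True by (simp add: algebra_simps)
      next
        case False then show ?thesis using e \<alpha>0 xnn[of i] by simp
      qed
    qed
    moreover have "(\<Sum>i\<in>UNIV. x'$i) = 1" using xsum wsum
      by (simp add: x'c sum.distrib sum_distrib_left[symmetric])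
    ultimately show ?thesis unfolding std_simplex_def by simp
  qed
  have Aw: "A *v w = v" unfolding w_def v_def u_def
    by (simp add: matrix_vector_mult_basis matrix_vector_mult_diff_distrib)
  have Ax': "A *v x' = u + \<alpha> *\<^sub>R v" using Aw unfolding x'_eq u_def
    by (simp add: matrix_vector_right_distrib matrix_vector_mult_scaleR)
  have nw: "norm1 w \<le> 2"
  proof -
    have a1: "norm1 (axis j 1 :: real^'n) = 1" "norm1 (axis l 1 :: real^'n) = 1" by (rule norm1_simplex[OF axis_simplex])+
    have "norm1 (axis j 1 - x) \<le> 2" using a1 norm1_triangle[of "axis j 1" x] norm1_simplex[OF xS] norm1_simplex[OF axis_simplex] by simp
    moreover have "norm1 (x - axis l 1) \<le> 2" using a1 norm1_triangle[of x "axis l 1"] norm1_simplex[OF xS] norm1_simplex[OF axis_simplex] by simp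
    ultimately show ?thesis unfolding w_def by simp
  qed
  have nx': "norm1 (x' - x) \<le> 2 * \<alpha>"
    using x'_eq norm1_scale[of \<alpha> w] \<alpha>0 nw by (simp add: mult_left_mono mult.commute)
  show ?thesis
  proof (cases "Lr = 0")
    case True
    then have "\<alpha> = 0" unfolding \<alpha>_eq using amax0 by simp
    then have "x' = x" using x'_eq by simp
    then show ?thesis using True xS unfolding x'_def by (intro exI[of _ False]) simp
  next
    case False
    then have Lp: "0 < Lr" using L0 by simp
    have \<alpha>le: "\<alpha> \<le> \<delta> / (4 * Lr)" unfolding \<alpha>_eq by simp
    have dec: "f (A *v x') - f u \<le> - \<alpha> * \<delta> + 2 * Lr * \<alpha>\<^sup>2"
    proof -
      have "f (A *v x') - f u - g \<bullet> (A *v x' - u) \<le> Lr / 2 * (norm1 (x' - x))\<^sup>2"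
        using desc[OF Lp] x'S unfolding g_def u_def by blast
      also have "\<dots> \<le> Lr / 2 * (2 * \<alpha>)\<^sup>2"
        using nx' norm1_nonneg[of "x' - x"] Lp by (intro mult_left_mono power_mono) auto
      finally show ?thesis using Ax' unfolding \<delta>_def by (simp add: power2_eq_square algebra_simps)
    qed
    have "2 * Lr * \<alpha> \<le> \<delta>" using \<alpha>le Lp \<delta>0 by (simp add: field_simps)
    then have "\<alpha> * (2 * Lr * \<alpha>) \<le> \<alpha> * \<delta>" using \<alpha>0 by (rule mult_left_mono)
    then have "2 * Lr * \<alpha>\<^sup>2 \<le> \<alpha> * \<delta>" by (simp add: power2_eq_square algebra_simps)
    then have monof: "f (A *v x') \<le> f u" using dec by simp
    define drop where "drop = (\<not> fw \<and> \<alpha> = amax)"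
    have fin: "finite (supp x)" "finite (supp x')" by auto
    have suppinc: "supp x' \<subseteq> insert j (supp x)"
    proof
      fix i assume "i \<in> supp x'"
      then have pos: "x'$i > 0" unfolding supp_def by simp
      show "i \<in> insert j (supp x)"
      proof (rule ccontr)
        assume "i \<notin> insert j (supp x)"
        then have "i \<noteq> j" "x$i = 0" using xnn[of i] unfolding supp_def by auto
        then have "x'$i \<le> 0" using x'c[of i] \<alpha>0 unfolding w_def by (auto simp: axis_def)
        then show False using pos by simp
      qed
    qed
    have card_up: "card (supp x') \<le> card (supp x) + 1"
      using card_mono[OF _ suppinc] card_insert_le_m1 fin
      by (metis Suc_eq_plus1 card_insert_if finite_insert le_SucI order_trans)
    have card_drop: "card (supp x') + 1 \<le> card (supp x)" if drop
    proof -
      have nf: "\<not> fw" and ae: "\<alpha> = x$l / (1 - x$l)" using that unfolding drop_def amax_def by auto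
      have xl: "x$l < 1" using xl1[OF nf] .
      have "supp x' \<subseteq> supp x - {l}"
      proof
        fix i assume "i \<in> supp x'"
        then have pos: "x'$i > 0" unfolding supp_def by simp
        have e: "x'$i = (1 + \<alpha>) * x$i - \<alpha> * (if i = l then 1 else 0)"
          using nf x'c unfolding w_def by (simp add: axis_def algebra_simps)
        have "i \<noteq> l"
        proof
          assume "i = l"
          then have "x'$i = (1 + \<alpha>) * x$l - \<alpha>" using e by simp
          also have "\<dots> = 0" unfolding ae using xl by (simp add: field_simps)
          finally show False using pos by simp
        qed
        moreover have "x$i > 0"
        proof (rule ccontr)
          assume "\<not> x$i > 0"
          then have "x$i = 0" using xnn[of i] by simp
          then show False using e pos \<alpha>0 by (simp split: if_splits)
        qed
        ultimately show "i \<in> supp x - {l}" unfolding supp_def by simp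
      qed
      then have "card (supp x') \<le> card (supp x - {l})" by (intro card_mono) auto
      also have "\<dots> = card (supp x) - 1" using lsupp by simp
      moreover have "0 < card (supp x)" using lsupp fin card_gt_0_iff by blast
      ultimately show ?thesis by linarith
    qed
    have good: "f (A *v x') - fs \<le> (1 - c) * (f u - fs)" if "\<not> drop"
    proof (cases "mr = 0")
      case True
      then show ?thesis using monof unfolding c_def by simp
    next
      case False
      then have mp: "0 < mr" using m0 by simp
      obtain z where zS: "z \<in> std_simplex" and fz: "f (A *v z) = fs"
        and mz: "mr / 2 * (norm1 (x - z))\<^sup>2 \<le> f (A *v x) - fs" using mu[OF mp] by blast
      define F where "F = f u - fs"
      define d where "d = norm1 (x - z)"
      have F0: "0 \<le> F" unfolding F_def u_def using fsl xS by simp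
      have d0: "0 \<le> d" unfolding d_def by (rule norm1_nonneg)
      have md: "mr / 2 * d\<^sup>2 \<le> F" using mz unfolding d_def F_def u_def .
      have F1: "F \<le> g \<bullet> (u - A *v z)"
        using gi zS fz unfolding F_def g_def u_def by (force simp: inner_diff_right)
      have Adiff: "g \<bullet> (u - A *v z) = (\<Sum>i\<in>UNIV. (x - z)$i * h i)"
        unfolding u_def h_def by (simp add: matrix_vector_mult_diff_distrib[symmetric] mv_sum)
      have "F \<le> d / 2 * (h l - h j)" using F1 Adiff err_bound[OF xS zS jm' lm'] unfolding d_def by simp
      also have "\<dots> \<le> d / 2 * (2 * \<delta>)" using gap d0 by (intro mult_left_mono) auto
      finally have Fd: "F \<le> d * \<delta>" by simp
      have key: "mr * F \<le> 2 * \<delta>\<^sup>2"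
      proof (cases "F = 0")
        case True then show ?thesis by simp
      next
        case False
        then have Fp: "0 < F" using F0 by simp
        have "F\<^sup>2 \<le> (d * \<delta>)\<^sup>2" using Fd F0 by (intro power_mono) auto
        then have "mr * F\<^sup>2 \<le> mr * d\<^sup>2 * \<delta>\<^sup>2" using mp by (simp add: power_mult_distrib mult.assoc mult_left_mono)
        also have "\<dots> \<le> 2 * F * \<delta>\<^sup>2" using md mp
          by (intro mult_right_mono) (auto simp: field_simps)
        finally have "F * (mr * F) \<le> F * (2 * \<delta>\<^sup>2)" by (simp add: power2_eq_square algebra_simps)
        then show ?thesis using Fp by simp
      qed
      have c1: "c \<le> mr / (16 * Lr)" and c2: "c \<le> 1/2" unfolding c_def by auto
      show ?thesis
      proof (cases "\<alpha> = \<delta> / (4 * Lr)")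
        case True
        have "f (A *v x') - f u \<le> - \<delta>\<^sup>2 / (8 * Lr)"
          using dec Lp unfolding True by (simp add: power2_eq_square field_simps)
        also have "\<dots> \<le> - (mr / (16 * Lr)) * F" using key Lp by (simp add: field_simps)
        also have "\<dots> \<le> - c * F" using mult_right_mono[OF c1 F0] by simp
        finally show ?thesis unfolding F_def by (simp add: algebra_simps)
      next
        case False
        then have "\<alpha> = amax" "amax < \<delta> / (4 * Lr)" unfolding \<alpha>_eq by (auto simp: min_def split: if_splits)
        then have fwT: "fw" using that unfolding drop_def by auto
        then have a1: "\<alpha> = 1" using \<open>\<alpha> = amax\<close> unfolding amax_def by simp
        have "4 * Lr < \<delta>" using \<open>amax < \<delta> / (4 * Lr)\<close> a1 \<open>\<alpha> = amax\<close> Lp by (simp add: field_simps)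
        have "F \<le> \<delta>"
        proof -
          have "g \<bullet> (u - A *v z) = g \<bullet> u - (\<Sum>i\<in>UNIV. z$i * h i)"
            unfolding h_def by (simp add: inner_diff_right mv_sum)
          also have "\<dots> \<le> g \<bullet> u - h j" using simplex_lower[OF zS jm'] by simp
          also have "\<dots> = \<delta>" using gv fwT p_eq unfolding \<delta>_def by simp
          finally show ?thesis using F1 by simp
        qed
        have "f (A *v x') - f u \<le> - \<delta> + 2 * Lr" using dec a1 by simp
        then have "f (A *v x') - fs \<le> F / 2" using \<open>4 * Lr < \<delta>\<close> \<open>F \<le> \<delta>\<close> unfolding F_def by simp
        also have "\<dots> \<le> (1 - c) * F" using mult_right_mono[of "1/2" "1 - c" F] c2 F0 by simp
        finally show ?thesis unfolding F_def .
      qed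
    qed
    show ?thesis
      using x'S monof card_up card_drop good unfolding x'_def c_def u_def by blast
  qed
qed

theorem proposition3:
  fixes A :: "real^'n::finite^'m::finite"
    and f :: "real^'m \<Rightarrow> real" and df :: "real^'m \<Rightarrow> real^'m"
    and D :: "(real^'m) set"
    and x :: "nat \<Rightarrow> real^'n" and j l :: "nat \<Rightarrow> 'n"
  assumes two_cols: "\<exists>i i'. column i A \<noteq> column i' A"
    and D_open: "open D" and D_convex: "convex D" and conv_sub: "convA A \<subseteq> D"
    and f_convex: "convex_on D f"
    and f_grad: "\<forall>u\<in>D. (f has_derivative (\<lambda>h. df u \<bullet> h)) (at u)"
    and ratio: "L_fA A f df / mu_star A f < \<infinity>"
    and x0_vertex: "\<exists>i. x 0 = axis i 1"
    and j_argmin: "\<forall>k i. df (A *v x k) \<bullet> column (j k) A \<le> df (A *v x k) \<bullet> column i A"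
    and l_argmax: "\<forall>k. l k \<in> supp (x k) \<and>
                     (\<forall>i\<in>supp (x k). df (A *v x k) \<bullet> column i A \<le> df (A *v x k) \<bullet> column (l k) A)"
    and iter: "\<forall>k. x (Suc k) = fw_step A df (real_of_ereal (L_fA A f df)) (x k) (j k) (l k)"
  shows "\<forall>k. f (A *v x k) - fstar A f
           \<le> (1 - min (real_of_ereal (mu_star A f) / (16 * real_of_ereal (L_fA A f df))) (1/2))
                powr (real k / 2) * (f (A *v x 0) - fstar A f)"
proof -
  define fs where "fs = fstar A f"
  define Lr where "Lr = real_of_ereal (L_fA A f df)"
  define mr where "mr = real_of_ereal (mu_star A f)"
  have imgD: "A *v y \<in> D" if "y \<in> std_simplex" for y
    using conv_sub that unfolding convA_def by auto
  have cont_f: "continuous_on D f"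
    using f_grad has_derivative_continuous continuous_at_imp_continuous_on by blast
  have cfa: "continuous_on std_simplex (\<lambda>z. f (A *v z))"
    by (rule continuous_on_compose2[OF cont_f]) (auto intro!: continuous_intros imgD)
  obtain xm where xm: "xm \<in> std_simplex" "\<And>y. y \<in> std_simplex \<Longrightarrow> f (A *v xm) \<le> f (A *v y)"
    using continuous_attains_inf[OF simplex_compact _ cfa] axis_simplex by blast
  have fs_eq: "fs = f (A *v xm)" unfolding fs_def fstar_def
    by (rule cInf_eq_minimum) (use xm in auto)
  have fsl: "\<forall>y\<in>std_simplex. fs \<le> f (A *v y)" using xm fs_eq by simp
  have gi: "f (A *v y) + df (A *v y) \<bullet> (A *v y' - A *v y) \<le> f (A *v y')"
    if "y \<in> std_simplex" "y' \<in> std_simplex" for y y'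
    by (rule grad_ineq[OF D_open D_convex f_convex f_grad]) (use imgD that in auto)
  have Zs_closed: "closed (Zstar A f)" unfolding Zstar_def
    by (rule continuous_closed_preimage_constant[OF cfa simplex_closed])
  have Zs_sub: "Zstar A f \<subseteq> std_simplex" unfolding Zstar_def by auto
  have Zs_ne: "Zstar A f \<noteq> {}" using xm fs_eq unfolding Zstar_def fs_def by auto
  have L_ge: "0 \<le> L_fA A f df"
  proof -
    obtain i i' where ne: "column i A \<noteq> column i' A" using two_cols by blast
    define u0 where "u0 = A *v axis i 1"
    define y0 :: "real^'n" where "y0 = axis i' 1"
    have u0c: "u0 \<in> convA A" unfolding u0_def convA_def using axis_simplex by blast
    have y0n: "y0 \<in> std_simplex - Zset A u0"
      using axis_simplex ne unfolding y0_def u0_def Zset_def by (auto simp: matrix_vector_mult_basis)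
    have "0 \<le> f (A *v y0) - f u0 - df u0 \<bullet> (A *v y0 - u0)"
      using gi[OF axis_simplex axis_simplex, of i i'] unfolding u0_def y0_def by simp
    then have "0 \<le> ereal (2 * (f (A *v y0) - f u0 - df u0 \<bullet> (A *v y0 - u0)) / (dist1 y0 (Zset A u0))\<^sup>2)"
      by simp
    then show ?thesis unfolding L_fA_def
      by (intro SUP_upper2[OF u0c] SUP_upper2[OF y0n])
  qed
  have L0: "0 \<le> Lr" unfolding Lr_def using L_ge by (rule real_of_ereal_pos)
  have mu_ge: "0 \<le> mu_star A f" unfolding mu_star_def
  proof (rule INF_greatest)
    fix y :: "real^'n" assume "y \<in> std_simplex - Zstar A f"
    then have "0 \<le> f (A *v y) - fstar A f" using fsl unfolding fs_def by auto
    then show "0 \<le> ereal (2 * (f (A *v y) - fstar A f) / (dist1 y (Zstar A f))\<^sup>2)" by simp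
  qed
  have m0: "0 \<le> mr" unfolding mr_def using mu_ge by (rule real_of_ereal_pos)
  have desc: "\<forall>y\<in>std_simplex. f (A *v y) - f (A *v z) - df (A *v z) \<bullet> (A *v y - A *v z) \<le> Lr / 2 * (norm1 (y - z))\<^sup>2"
    if Lp: "0 < Lr" and zS: "z \<in> std_simplex" for z
  proof
    fix y :: "real^'n" assume yS: "y \<in> std_simplex"
    have LE: "L_fA A f df = ereal Lr" using Lp unfolding Lr_def by (cases "L_fA A f df") auto
    define u where "u = A *v z"
    define B where "B = f (A *v y) - f u - df u \<bullet> (A *v y - u)"
    have Zc: "closed (Zset A u)" unfolding Zset_def
      by (rule continuous_closed_preimage_constant[OF _ simplex_closed]) (intro continuous_intros)
    have Zsub: "Zset A u \<subseteq> std_simplex" unfolding Zset_def by auto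
    have zZ: "z \<in> Zset A u" unfolding Zset_def u_def using zS by auto
    have nn: "0 \<le> Lr / 2 * (norm1 (y - z))\<^sup>2" using Lp by simp
    show "f (A *v y) - f (A *v z) - df (A *v z) \<bullet> (A *v y - A *v z) \<le> Lr / 2 * (norm1 (y - z))\<^sup>2"
    proof (cases "y \<in> Zset A u")
      case True
      then have "A *v y = u" unfolding Zset_def by simp
      then show ?thesis using nn unfolding u_def by simp
    next
      case False
      define d where "d = dist1 y (Zset A u)"
      have dp: "0 < d" unfolding d_def using dist1_attain(3)[OF Zc Zsub _ False] zZ by blast
      have dle: "d \<le> norm1 (y - z)" unfolding d_def using dist1_attain(2)[OF Zc Zsub _ zZ] zZ by blast
      have uc: "u \<in> convA A" unfolding convA_def u_def using zS by blast
      have "ereal (2 * B / d\<^sup>2) \<le> L_fA A f df" unfolding L_fA_def B_def d_def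
        by (intro SUP_upper2[OF uc] SUP_upper2[of y]) (use yS False in auto)
      then have "2 * B / d\<^sup>2 \<le> Lr" using LE by simp
      then have "B \<le> Lr / 2 * d\<^sup>2" using dp by (simp add: field_simps)
      also have "\<dots> \<le> Lr / 2 * (norm1 (y - z))\<^sup>2"
        using dle dp Lp by (intro mult_left_mono power_mono) auto
      finally show ?thesis unfolding B_def u_def .
    qed
  qed
  have mu: "\<exists>z\<in>std_simplex. f (A *v z) = fs \<and> mr / 2 * (norm1 (y - z))\<^sup>2 \<le> f (A *v y) - fs"
    if mp: "0 < mr" and yS: "y \<in> std_simplex" for y
  proof (cases "y \<in> Zstar A f")
    case True
    then show ?thesis unfolding Zstar_def fs_def by (intro bexI[of _ y]) (auto simp: norm1_def)
  next
    case False
    have ME: "mu_star A f = ereal mr" using mp unfolding mr_def by (cases "mu_star A f") auto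
    obtain z where zZ: "z \<in> Zstar A f" and dz: "dist1 y (Zstar A f) = norm1 (y - z)"
      using dist1_attain(1)[OF Zs_closed Zs_sub Zs_ne] by blast
    have dp: "0 < norm1 (y - z)" using dist1_attain(3)[OF Zs_closed Zs_sub Zs_ne False] dz by simp
    have "mu_star A f \<le> ereal (2 * (f (A *v y) - fs) / (norm1 (y - z))\<^sup>2)"
      unfolding mu_star_def fs_def using yS False dz by (intro INF_lower2[of y]) auto
    then have "mr \<le> 2 * (f (A *v y) - fs) / (norm1 (y - z))\<^sup>2" using ME by simp
    then have "mr / 2 * (norm1 (y - z))\<^sup>2 \<le> f (A *v y) - fs" using dp by (simp add: field_simps)
    moreover have "z \<in> std_simplex" "f (A *v z) = fs" using zZ unfolding Zstar_def fs_def by auto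
    ultimately show ?thesis by blast
  qed
  define c where "c = min (mr / (16 * Lr)) (1/2)"
  define P where "P = (\<lambda>k dr. x (Suc k) \<in> std_simplex \<and> f (A *v x (Suc k)) \<le> f (A *v x k)
        \<and> card (supp (x (Suc k))) \<le> card (supp (x k)) + 1
        \<and> (dr \<longrightarrow> card (supp (x (Suc k))) + 1 \<le> card (supp (x k)))
        \<and> (\<not> dr \<longrightarrow> f (A *v x (Suc k)) - fs \<le> (1 - c) * (f (A *v x k) - fs)))"
  have stepk: "\<exists>dr. P k dr" if xk: "x k \<in> std_simplex" for k
  proof -
    have it: "x (Suc k) = fw_step A df Lr (x k) (j k) (l k)" using iter Lr_def by simp
    show ?thesis
      unfolding P_def c_def it
    proof (rule step_lemma)
      show "x k \<in> std_simplex" by (rule xk)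
      show "\<forall>i. df (A *v x k) \<bullet> column (j k) A \<le> df (A *v x k) \<bullet> column i A" using j_argmin by blast
      show "l k \<in> supp (x k) \<and> (\<forall>i\<in>supp (x k). df (A *v x k) \<bullet> column i A \<le> df (A *v x k) \<bullet> column (l k) A)"
        using l_argmax by blast
      show "\<forall>y\<in>std_simplex. f (A *v x k) + df (A *v x k) \<bullet> (A *v y - A *v x k) \<le> f (A *v y)"
        using gi xk by blast
      show "\<forall>y\<in>std_simplex. fs \<le> f (A *v y)" by (rule fsl)
      show "0 \<le> Lr" by (rule L0)
      show "0 \<le> mr" by (rule m0)
      show "0 < Lr \<Longrightarrow> \<forall>y\<in>std_simplex. f (A *v y) - f (A *v x k) - df (A *v x k) \<bullet> (A *v y - A *v x k) \<le> Lr / 2 * (norm1 (y - x k))\<^sup>2"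
        using desc xk by blast
      show "0 < mr \<Longrightarrow> \<exists>z\<in>std_simplex. f (A *v z) = fs \<and> mr / 2 * (norm1 (x k - z))\<^sup>2 \<le> f (A *v x k) - fs"
        using mu xk by blast
    qed
  qed
  have xS: "x k \<in> std_simplex" for k
  proof (induction k)
    case 0 then show ?case using x0_vertex axis_simplex by auto
  next
    case (Suc k) then show ?case using stepk[of k] unfolding P_def by blast
  qed
  obtain dr where dr: "\<forall>k. P k (dr k)" using choice[of P] stepk xS by blast
  have c0: "0 \<le> c" unfolding c_def using m0 L0 by simp
  have c2: "c \<le> 1/2" unfolding c_def by simp
  have s1: "1 \<le> card (supp (x k))" for k
  proof -
    have "\<exists>i. x k $ i > 0"
    proof (rule ccontr)
      assume "\<not> (\<exists>i. x k $ i > 0)"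
      then have "(\<Sum>i\<in>UNIV. x k $ i) \<le> 0" by (simp add: sum_nonpos leI)
      then show False using xS[of k] unfolding std_simplex_def by simp
    qed
    then have "supp (x k) \<noteq> {}" unfolding supp_def by auto
    then show ?thesis by (simp add: Suc_leI card_gt_0_iff)
  qed
  have s0: "card (supp (x 0)) = 1"
  proof -
    obtain i where "x 0 = axis i 1" using x0_vertex by blast
    then have "supp (x 0) = {i}" unfolding supp_def by (auto simp: axis_def)
    then show ?thesis by simp
  qed
  have res: "f (A *v x k) - fs \<le> (1 - c) powr (real k / 2) * (f (A *v x 0) - fs)" for k
    by (rule count_lemma[where s = "\<lambda>k. card (supp (x k))" and drop = dr])
       (use dr c0 c2 s1 s0 fsl xS in \<open>auto simp: P_def\<close>)
  show ?thesis using res unfolding c_def mr_def Lr_def fs_def by blast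
qed

end
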